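(* Let $G$ be a connected (finite, simple) graph with $\beta(G)=|E|-\operatorname{rank}(E)=2$. Then $G$ is uniformly dense if and only if $G$ can be constructed from three paths, of lengths $L_1,L_2,L_3\ge 0$, by identifying their starting vertices into a single vertex and their end vertices into a single vertex, where the lengths satisfy $L_3-L_2\le L_1\le L_2\le L_3$.
   Context: For a graph $G=(V,E)$ and $A\subseteq E$, $c(A)$ denotes the number of connected components of $(V,A)$, $\operatorname{rank}(A)=|V|-c(A)$ (the rank in the cycle matroid, whose bases are spanning trees), and $\rho(A)=|A|/\operatorname{rank}(A)$ for nonempty $A$. $G$ is uniformly dense if $\rho(A)\le\rho(E)$ for all nonempty $A\subseteq E$. A path of length $0$ is a single vertex (so its two ends coincide). *)

theory Defs
  imports Main "HOL-Library.Disjoint_Sets" Complex_Main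
begin

definition simple_graph :: "'a set \<Rightarrow> 'a set set \<Rightarrow> bool" where
  "simple_graph V E \<longleftrightarrow> finite V \<and>
     (\<forall>e\<in>E. \<exists>u v. u \<noteq> v \<and> u \<in> V \<and> v \<in> V \<and> e = {u, v})"

definition conn_rel :: "'a set \<Rightarrow> 'a set set \<Rightarrow> ('a \<times> 'a) set" where
  "conn_rel V A = {(u, v). u \<in> V \<and> v \<in> V \<and> (u, v) \<in> ({(x, y). {x, y} \<in> A})\<^sup>*}"

definition num_comp :: "'a set \<Rightarrow> 'a set set \<Rightarrow> nat" where
  "num_comp V A = card (V // conn_rel V A)"

definition grank :: "'a set \<Rightarrow> 'a set set \<Rightarrow> nat" where
  "grank V A = card V - num_comp V A"

definition density :: "'a set \<Rightarrow> 'a set set \<Rightarrow> real" where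
  "density V A = real (card A) / real (grank V A)"

definition uniformly_dense :: "'a set \<Rightarrow> 'a set set \<Rightarrow> bool" where
  "uniformly_dense V E \<longleftrightarrow>
     (\<forall>A. A \<subseteq> E \<longrightarrow> A \<noteq> {} \<longrightarrow> density V A \<le> density V E)"

definition connected_graph :: "'a set \<Rightarrow> 'a set set \<Rightarrow> bool" where
  "connected_graph V E \<longleftrightarrow> num_comp V E = 1"

definition cycle_rank :: "'a set \<Rightarrow> 'a set set \<Rightarrow> int" where
  "cycle_rank V E = int (card E) - int (grank V E)"

text \<open>A vertex list xs describing a path of length L from s to t, where the inner vertices
  are pairwise distinct and different from both ends (the ends s, t may coincide; a path of
  length 0 is the single vertex s = t).\<close>
definition path_piece :: "'a list \<Rightarrow> 'a \<Rightarrow> 'a \<Rightarrow> nat \<Rightarrow> bool" where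
  "path_piece xs s t L \<longleftrightarrow> length xs = L + 1 \<and> hd xs = s \<and> last xs = t \<and>
     distinct (butlast (tl xs)) \<and> s \<notin> set (butlast (tl xs)) \<and> t \<notin> set (butlast (tl xs))"

definition inner_verts :: "'a list \<Rightarrow> 'a set" where
  "inner_verts xs = set (butlast (tl xs))"

definition path_edges :: "'a list \<Rightarrow> 'a set set" where
  "path_edges xs = {{xs ! i, xs ! Suc i} | i. Suc i < length xs}"

text \<open>G = (V,E) is (isomorphic to) the graph obtained from three paths of lengths L1, L2, L3
  by identifying their start vertices into s and their end vertices into t: the three paths
  are internally vertex-disjoint, their inner vertices avoid s and t, together they cover V,
  and E is the union of their edge sets, with all L1+L2+L3 edges distinct.\<close>
definition three_path_graph :: "'a set \<Rightarrow> 'a set set \<Rightarrow> nat \<Rightarrow> nat \<Rightarrow> nat \<Rightarrow> bool" where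
  "three_path_graph V E L1 L2 L3 \<longleftrightarrow>
     (\<exists>s t p1 p2 p3.
        path_piece p1 s t L1 \<and> path_piece p2 s t L2 \<and> path_piece p3 s t L3 \<and>
        inner_verts p1 \<inter> inner_verts p2 = {} \<and> inner_verts p1 \<inter> inner_verts p3 = {} \<and>
        inner_verts p2 \<inter> inner_verts p3 = {} \<and>
        V = set p1 \<union> set p2 \<union> set p3 \<and>
        E = path_edges p1 \<union> path_edges p2 \<union> path_edges p3 \<and>
        card E = L1 + L2 + L3)"

end

theory Submission
  imports Defs
begin

fun pe :: "'a list \<Rightarrow> 'a set set" where
  "pe (x # y # zs) = insert {x,y} (pe (y # zs))"
| "pe _ = {}"

lemma path_edges_Cons2: "path_edges (x # y # zs) = insert {x,y} (path_edges (y # zs))"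
  unfolding path_edges_def
proof (rule set_eqI, rule iffI)
  fix e assume "e \<in> {{(x # y # zs) ! i, (x # y # zs) ! Suc i} |i. Suc i < length (x # y # zs)}"
  then obtain i where "e = {(x # y # zs) ! i, (x # y # zs) ! Suc i}" "Suc i < length (x # y # zs)" by blast
  then show "e \<in> insert {x, y} {{(y # zs) ! i, (y # zs) ! Suc i} |i. Suc i < length (y # zs)}"
    by (cases i) auto
next
  fix e assume "e \<in> insert {x, y} {{(y # zs) ! i, (y # zs) ! Suc i} |i. Suc i < length (y # zs)}"
  then show "e \<in> {{(x # y # zs) ! i, (x # y # zs) ! Suc i} |i. Suc i < length (x # y # zs)}"
  proof
    assume "e = {x,y}" then show ?thesis by force
  next
    assume "e \<in> {{(y # zs) ! i, (y # zs) ! Suc i} |i. Suc i < length (y # zs)}"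
    then obtain i where "e = {(y # zs) ! i, (y # zs) ! Suc i}" "Suc i < length (y # zs)" by blast
    then show ?thesis
      by (auto intro!: exI[of _ "Suc i"])
  qed
qed

lemma path_edges_pe: "path_edges xs = pe xs"
proof (induction xs rule: pe.induct)
  case (1 x y zs)
  then show ?case by (simp add: path_edges_Cons2)
qed (auto simp: path_edges_def)

lemma pe_append: "pe (xs @ y # zs) = pe (xs @ [y]) \<union> pe (y # zs)"
proof (induction xs)
  case (Cons a xs)
  then show ?case by (cases xs) auto
qed simp

lemma pe_append2: "xs \<noteq> [] \<Longrightarrow> ys \<noteq> [] \<Longrightarrow> pe (xs @ ys) = pe xs \<union> pe ys \<union> {{last xs, hd ys}}"
proof (induction xs)
  case (Cons a xs)
  then show ?case by (cases xs; cases ys) auto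
qed simp

lemma pe_rev: "pe (rev xs) = pe xs"
proof (induction xs)
  case (Cons x xs)
  then show ?case
  proof (cases xs)
    case (Cons y ys)
    have "pe (rev (x # xs)) = pe (rev xs @ [x])" by simp
    also have "\<dots> = pe (rev xs) \<union> pe [x] \<union> {{last (rev xs), hd [x]}}"
      using Cons by (intro pe_append2) auto
    also have "\<dots> = pe (x # xs)" using Cons \<open>pe (rev xs) = pe xs\<close> by (auto simp: last_rev insert_commute)
    finally show ?thesis .
  qed simp
qed simp

lemma pe_edge: "e \<in> pe xs \<Longrightarrow> \<exists>u v. e = {u,v} \<and> u \<in> set xs \<and> v \<in> set xs"
  by (induction xs rule: pe.induct) auto

lemma pe_sub_set: "e \<in> pe xs \<Longrightarrow> e \<subseteq> set xs"
  using pe_edge by fastforce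

lemma set_sub_Union_pe: "length xs \<ge> 2 \<Longrightarrow> set xs \<subseteq> \<Union>(pe xs)"
proof (induction xs rule: pe.induct)
  case (1 x y zs)
  then show ?case by (cases zs) auto
qed auto

lemma finite_pe: "finite (pe xs)"
  by (induction xs rule: pe.induct) auto

lemma card_pe_le: "card (pe xs) \<le> length xs - 1"
proof (induction xs rule: pe.induct)
  case (1 x y zs)
  then show ?case using card_insert_le_m1[of "Suc (length zs)" "pe (y # zs)" "{x,y}"] finite_pe
    by (simp add: card_insert_if)
qed auto

lemma card_pe_distinct: "distinct xs \<Longrightarrow> card (pe xs) = length xs - 1"
proof (induction xs rule: pe.induct)
  case (1 x y zs)
  have "{x,y} \<notin> pe (y # zs)" using 1(2) pe_sub_set by fastforce
  then show ?case using 1 by (simp add: finite_pe)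
qed auto

lemma pe_split: "e \<in> pe xs \<Longrightarrow> \<exists>ys zs. xs = ys @ zs \<and> ys \<noteq> [] \<and> zs \<noteq> [] \<and> e = {last ys, hd zs}"
proof (induction xs rule: pe.induct)
  case (1 x y zs)
  show ?case
  proof (cases "e = {x,y}")
    case True
    then show ?thesis by (intro exI[of _ "[x]"] exI[of _ "y # zs"]) auto
  next
    case False
    then obtain ys zs' where "y # zs = ys @ zs'" "ys \<noteq> []" "zs' \<noteq> []" "e = {last ys, hd zs'}"
      using 1 by auto
    then show ?thesis by (intro exI[of _ "x # ys"] exI[of _ zs']) auto
  qed
qed auto

lemma pe_mono_append1: "pe xs \<subseteq> pe (xs @ ys)"
proof (induction xs)
  case (Cons a xs) then show ?case by (cases xs; cases ys) auto
qed auto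

lemma pe_mono_append2: "pe ys \<subseteq> pe (xs @ ys)"
  using pe_mono_append1[of "rev ys" "rev xs"] by (simp add: pe_rev flip: rev_append)

definition adj :: "'a set set \<Rightarrow> ('a \<times> 'a) set" where
  "adj A = {(x, y). {x, y} \<in> A}"

lemma conn_rel_adj: "conn_rel V A = {(u, v). u \<in> V \<and> v \<in> V \<and> (u, v) \<in> (adj A)\<^sup>*}"
  unfolding conn_rel_def adj_def by simp

lemma sym_adj: "sym (adj A)"
  unfolding adj_def sym_def by (auto simp: insert_commute)

lemma conn_equiv: "equiv V (conn_rel V A)"
  unfolding equiv_def conn_rel_adj
proof (intro conjI)
  show "refl_on V {(u, v). u \<in> V \<and> v \<in> V \<and> (u, v) \<in> (adj A)\<^sup>*}"
    unfolding refl_on_def by auto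
  show "sym {(u, v). u \<in> V \<and> v \<in> V \<and> (u, v) \<in> (adj A)\<^sup>*}"
    using sym_rtrancl[OF sym_adj, of A] unfolding sym_def by auto
  show "trans {(u, v). u \<in> V \<and> v \<in> V \<and> (u, v) \<in> (adj A)\<^sup>*}"
    unfolding trans_def by auto
qed auto

lemma conn_sym: "(u,v) \<in> conn_rel V A \<Longrightarrow> (v,u) \<in> conn_rel V A"
  using conn_equiv[of V A] unfolding equiv_def sym_def by blast

lemma conn_trans: "(u,v) \<in> conn_rel V A \<Longrightarrow> (v,w) \<in> conn_rel V A \<Longrightarrow> (u,w) \<in> conn_rel V A"
  using conn_equiv[of V A] unfolding equiv_def trans_def by blast

lemma conn_refl: "u \<in> V \<Longrightarrow> (u,u) \<in> conn_rel V A"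
  unfolding conn_rel_adj by auto

lemma conn_mono: "A \<subseteq> B \<Longrightarrow> (u,v) \<in> conn_rel V A \<Longrightarrow> (u,v) \<in> conn_rel V B"
  unfolding conn_rel_adj using rtrancl_mono[of "adj A" "adj B"] unfolding adj_def by auto

lemma conn_edge: "u \<in> V \<Longrightarrow> v \<in> V \<Longrightarrow> {u,v} \<in> A \<Longrightarrow> (u,v) \<in> conn_rel V A"
  unfolding conn_rel_adj adj_def by auto

lemma walk_conn: "xs \<noteq> [] \<Longrightarrow> set xs \<subseteq> V \<Longrightarrow> pe xs \<subseteq> A \<Longrightarrow> (hd xs, last xs) \<in> conn_rel V A"
proof (induction xs rule: pe.induct)
  case (1 x y zs)
  then have "(x,y) \<in> conn_rel V A" by (intro conn_edge) auto
  moreover have "(y, last (y # zs)) \<in> conn_rel V A" using 1 by auto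
  ultimately show ?case using conn_trans by auto
qed (auto intro: conn_refl)

lemma set_walk_conn: assumes "u \<in> set xs" "w \<in> set xs" "set xs \<subseteq> V" "pe xs \<subseteq> A"
  shows "(u,w) \<in> conn_rel V A"
proof -
  have h: "(hd xs, q) \<in> conn_rel V A" if "q \<in> set xs" for q
  proof -
    obtain ys zs where xs: "xs = ys @ q # zs" using \<open>q \<in> set xs\<close> split_list by metis
    have "pe (ys @ [q]) \<subseteq> A" using assms(4) pe_append[of ys q zs] xs by auto
    from walk_conn[OF _ _ this] assms(3) xs show ?thesis by (cases ys) auto
  qed
  show ?thesis using h[OF assms(1)] h[OF assms(2)] conn_sym conn_trans by metis
qed

lemma rtrancl_path: "(u,v) \<in> (adj A)\<^sup>* \<Longrightarrow> \<exists>xs. xs \<noteq> [] \<and> hd xs = u \<and> last xs = v \<and> distinct xs \<and> pe xs \<subseteq> A"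
proof (induction rule: converse_rtrancl_induct)
  case base
  then show ?case by (intro exI[of _ "[v]"]) auto
next
  case (step u w)
  then obtain xs where xs: "xs \<noteq> []" "hd xs = w" "last xs = v" "distinct xs" "pe xs \<subseteq> A" by blast
  show ?case
  proof (cases "u \<in> set xs")
    case True
    then obtain ys zs where "xs = ys @ u # zs" using split_list by metis
    then show ?thesis using xs pe_append[of ys u zs]
      by (intro exI[of _ "u # zs"]) (auto split: if_splits)
  next
    case False
    have "{u,w} \<in> A" using step(1) unfolding adj_def by auto
    then show ?thesis using xs False
      by (intro exI[of _ "u # xs"]) (cases xs, auto)
  qed
qed

lemma rtrancl_Union: "(u,v) \<in> (adj A)\<^sup>* \<Longrightarrow> u = v \<or> v \<in> \<Union>A"
  by (induction rule: rtrancl_induct) (auto simp: adj_def)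

lemma rtrancl_cross: "(u,v) \<in> (adj A)\<^sup>* \<Longrightarrow> u \<in> W \<Longrightarrow> v \<notin> W \<Longrightarrow> \<exists>x y. {x,y} \<in> A \<and> x \<in> W \<and> y \<notin> W"
  by (induction rule: rtrancl_induct) (auto simp: adj_def)

lemma conn_rel_sub: "(x,y) \<in> conn_rel V A \<Longrightarrow> x \<in> V \<and> y \<in> V"
  unfolding conn_rel_adj by auto

lemma quotient_conn: "V // conn_rel V A = (\<lambda>x. conn_rel V A `` {x}) ` V"
  unfolding quotient_def by auto

lemma num_comp_le: "finite V \<Longrightarrow> num_comp V A \<le> card V"
  unfolding num_comp_def quotient_conn by (rule card_image_le)

lemma conn_rel_empty: "conn_rel V {} = Id_on V"
  unfolding conn_rel_adj adj_def by auto

lemma num_comp_empty: "finite V \<Longrightarrow> num_comp V {} = card V"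
proof -
  have "conn_rel V {} `` {x} = {x}" if "x \<in> V" for x
    using that unfolding conn_rel_empty by auto
  then have "V // conn_rel V {} = (\<lambda>x. {x}) ` V"
    unfolding quotient_conn by simp
  then show ?thesis unfolding num_comp_def by (simp add: card_image)
qed

lemma grank_empty: "finite V \<Longrightarrow> grank V {} = 0"
  unfolding grank_def using num_comp_empty[of V] by simp

lemma adj_insert: "adj (insert {u,v} A) = adj A \<union> {(u,v),(v,u)}"
  unfolding adj_def by (auto simp: doubleton_eq_iff)

lemma conn_insert_conn:
  assumes "(u,v) \<in> conn_rel V A"
  shows "conn_rel V (insert {u,v} A) = conn_rel V A"
proof -
  have uv: "(u,v) \<in> (adj A)\<^sup>*" "(v,u) \<in> (adj A)\<^sup>*"
    using assms conn_sym[OF assms] unfolding conn_rel_adj by auto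
  have "(adj (insert {u,v} A))\<^sup>* = (adj A)\<^sup>*"
    unfolding adj_insert by (rule rtrancl_subset) (use uv in auto)
  then show ?thesis unfolding conn_rel_adj by simp
qed

lemma grank_insert_conn:
  "(u,v) \<in> conn_rel V A \<Longrightarrow> grank V (insert {u,v} A) = grank V A"
  unfolding grank_def num_comp_def using conn_insert_conn by metis

lemma rtrancl_insert_edge:
  "(x,y) \<in> (R \<union> {(u,v),(v,u)})\<^sup>* \<longleftrightarrow>
    (x,y) \<in> R\<^sup>* \<or> ((x,u) \<in> R\<^sup>* \<and> (v,y) \<in> R\<^sup>*) \<or> ((x,v) \<in> R\<^sup>* \<and> (u,y) \<in> R\<^sup>*)"
proof
  assume "(x,y) \<in> (R \<union> {(u,v),(v,u)})\<^sup>*"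
  then show "(x,y) \<in> R\<^sup>* \<or> ((x,u) \<in> R\<^sup>* \<and> (v,y) \<in> R\<^sup>*) \<or> ((x,v) \<in> R\<^sup>* \<and> (u,y) \<in> R\<^sup>*)"
  proof (induction rule: rtrancl_induct)
    case base then show ?case by simp
  next
    case (step y z)
    from step(2) show ?case
    proof
      assume "(y,z) \<in> R" then show ?thesis using step(3) by (meson rtrancl.rtrancl_into_rtrancl)
    next
      assume "(y,z) \<in> {(u,v),(v,u)}"
      then show ?thesis using step(3) by auto
    qed
  qed
next
  have m: "R\<^sup>* \<subseteq> (R \<union> {(u,v),(v,u)})\<^sup>*" by (rule rtrancl_mono) auto
  have uv: "(u,v) \<in> (R \<union> {(u,v),(v,u)})\<^sup>*" "(v,u) \<in> (R \<union> {(u,v),(v,u)})\<^sup>*" by auto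
  assume "(x,y) \<in> R\<^sup>* \<or> ((x,u) \<in> R\<^sup>* \<and> (v,y) \<in> R\<^sup>*) \<or> ((x,v) \<in> R\<^sup>* \<and> (u,y) \<in> R\<^sup>*)"
  then show "(x,y) \<in> (R \<union> {(u,v),(v,u)})\<^sup>*"
    using m uv by (meson rtrancl_trans subsetD)
qed

lemma conn_insert_char:
  assumes "u \<in> V" "v \<in> V"
  shows "(x,y) \<in> conn_rel V (insert {u,v} A) \<longleftrightarrow>
    (x,y) \<in> conn_rel V A \<or> ((u,x) \<in> conn_rel V A \<and> (v,y) \<in> conn_rel V A)
      \<or> ((v,x) \<in> conn_rel V A \<and> (u,y) \<in> conn_rel V A)"
proof -
  have s: "(p,q) \<in> (adj A)\<^sup>* \<longleftrightarrow> (q,p) \<in> (adj A)\<^sup>*" for p q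
    using sym_rtrancl[OF sym_adj, of A] unfolding sym_def by blast
  show ?thesis
    unfolding conn_rel_adj adj_insert rtrancl_insert_edge using assms s by auto
qed

lemma num_comp_insert_disconn:
  assumes V: "finite V" "u \<in> V" "v \<in> V" and nc: "(u,v) \<notin> conn_rel V A"
  shows "num_comp V (insert {u,v} A) + 1 = num_comp V A"
proof -
  define r where "r = conn_rel V A"
  define r' where "r' = conn_rel V (insert {u,v} A)"
  define Cu where "Cu = r `` {u}"
  define Cv where "Cv = r `` {v}"
  have eq: "equiv V r" unfolding r_def by (rule conn_equiv)
  have rs: "(x,y) \<in> r \<Longrightarrow> (y,x) \<in> r" for x y unfolding r_def by (rule conn_sym)
  have rt: "(x,y) \<in> r \<Longrightarrow> (y,z) \<in> r \<Longrightarrow> (x,z) \<in> r" for x y z unfolding r_def by (rule conn_trans)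
  have rV: "(x,y) \<in> r \<Longrightarrow> x \<in> V \<and> y \<in> V" for x y unfolding r_def by (rule conn_rel_sub)
  have rr: "x \<in> V \<Longrightarrow> (x,x) \<in> r" for x unfolding r_def by (rule conn_refl)
  have char: "(x,y) \<in> r' \<longleftrightarrow> (x,y) \<in> r \<or> (x \<in> Cu \<and> y \<in> Cv) \<or> (x \<in> Cv \<and> y \<in> Cu)" for x y
    unfolding r'_def conn_insert_char[OF V(2,3)] Cu_def Cv_def r_def[symmetric] by auto
  have cls: "r' `` {w} = (if w \<in> Cu \<union> Cv then Cu \<union> Cv else r `` {w})" if "w \<in> V" for w
  proof (cases "w \<in> Cu")
    case True
    then have "(u,w) \<in> r" unfolding Cu_def by auto
    then have e: "(w,y) \<in> r \<longleftrightarrow> (u,y) \<in> r" for y using rs rt by blast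
    have "y \<in> r' `` {w} \<longleftrightarrow> y \<in> Cu \<union> Cv" for y
      using True by (simp add: char e) (auto simp: Cu_def)
    then show ?thesis using True by auto
  next
    case F1: False
    show ?thesis
    proof (cases "w \<in> Cv")
      case True
      then have "(v,w) \<in> r" unfolding Cv_def by auto
      then have e: "(w,y) \<in> r \<longleftrightarrow> (v,y) \<in> r" for y using rs rt by blast
      have "y \<in> r' `` {w} \<longleftrightarrow> y \<in> Cu \<union> Cv" for y
        using True F1 by (simp add: char e) (auto simp: Cv_def)
      then show ?thesis using True by auto
    next
      case False
      have "y \<in> r' `` {w} \<longleftrightarrow> y \<in> r `` {w}" for y
        using False F1 by (simp add: char)
      then show ?thesis using False F1 by auto
    qed
  qed
  define Q where "Q = V // r"
  have CuQ: "Cu \<in> Q" and CvQ: "Cv \<in> Q" unfolding Q_def Cu_def Cv_def using V by (auto intro: quotientI)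
  have uCu: "u \<in> Cu" and vCv: "v \<in> Cv" unfolding Cu_def Cv_def using rr V by auto
  have vnCu: "v \<notin> Cu" using nc unfolding Cu_def r_def by auto
  have CuCv: "Cu \<noteq> Cv" using vnCu vCv by auto
  have notin: "Cu \<union> Cv \<notin> Q - {Cu, Cv}"
  proof
    assume "Cu \<union> Cv \<in> Q - {Cu, Cv}"
    then obtain w where w: "w \<in> V" "Cu \<union> Cv = r `` {w}" "Cu \<union> Cv \<noteq> Cu" unfolding Q_def quotient_def by auto
    then have "(w,u) \<in> r" "(w,v) \<in> r" using uCu vCv by auto
    then have "(u,v) \<in> r" using rs rt by blast
    then show False using nc r_def by simp
  qed
  have Q': "V // r' = insert (Cu \<union> Cv) (Q - {Cu, Cv})"
  proof (rule set_eqI, rule iffI)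
    fix X assume "X \<in> V // r'"
    then obtain w where w: "w \<in> V" "X = r' `` {w}" unfolding quotient_def by auto
    show "X \<in> insert (Cu \<union> Cv) (Q - {Cu, Cv})"
    proof (cases "w \<in> Cu \<union> Cv")
      case True then show ?thesis using w cls by simp
    next
      case False
      then have "X = r `` {w}" using w cls by simp
      moreover have "w \<in> r `` {w}" using rr w by auto
      ultimately show ?thesis using False w unfolding Q_def by (auto intro: quotientI)
    qed
  next
    fix X assume X: "X \<in> insert (Cu \<union> Cv) (Q - {Cu, Cv})"
    show "X \<in> V // r'"
    proof (cases "X = Cu \<union> Cv")
      case True
      then have "X = r' `` {u}" using cls V uCu by simp
      then show ?thesis using V by (auto intro: quotientI)
    next
      case False
      then obtain w where w: "w \<in> V" "X = r `` {w}" "X \<noteq> Cu" "X \<noteq> Cv" using X unfolding Q_def quotient_def by auto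
      have "w \<notin> Cu"
      proof
        assume "w \<in> Cu" then have "(u,w) \<in> r" unfolding Cu_def by auto
        then have "r `` {w} = Cu" unfolding Cu_def using rs rt by blast
        then show False using w by simp
      qed
      moreover have "w \<notin> Cv"
      proof
        assume "w \<in> Cv" then have "(v,w) \<in> r" unfolding Cv_def by auto
        then have "r `` {w} = Cv" unfolding Cv_def using rs rt by blast
        then show False using w by simp
      qed
      ultimately have "X = r' `` {w}" using cls w by simp
      then show ?thesis using w by (auto intro: quotientI)
    qed
  qed
  have fQ: "finite Q" unfolding Q_def quotient_conn r_def using V by simp
  have c1: "card (V // r') = card (Q - {Cu, Cv}) + 1" unfolding Q' using notin fQ by simp
  have "card {Cu,Cv} \<le> card Q" using CuQ CvQ fQ by (intro card_mono) auto
  then have c2: "card (Q - {Cu,Cv}) + 2 = card Q" using CuQ CvQ CuCv fQ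
    by (simp add: card_Diff_subset)
  from c1 c2 show ?thesis unfolding num_comp_def r'_def Q_def r_def by simp
qed

definition beta :: "'a set \<Rightarrow> 'a set set \<Rightarrow> int" where
  "beta V A = int (card A) - int (grank V A)"

lemma grank_insert_disconn:
  assumes "finite V" "u \<in> V" "v \<in> V" "(u,v) \<notin> conn_rel V A"
  shows "grank V (insert {u,v} A) = grank V A + 1"
  using num_comp_insert_disconn[OF assms] num_comp_le[OF assms(1), of A]
  unfolding grank_def by linarith

lemma grank_insert_le:
  assumes "finite V" "u \<in> V" "v \<in> V"
  shows "grank V A \<le> grank V (insert {u,v} A) \<and> grank V (insert {u,v} A) \<le> grank V A + 1"
  using grank_insert_disconn[OF assms] grank_insert_conn[of u v V A] by (cases "(u,v) \<in> conn_rel V A") auto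

lemma sg_finite: "simple_graph V E \<Longrightarrow> finite V"
  unfolding simple_graph_def by simp

lemma sg_edge: "simple_graph V E \<Longrightarrow> e \<in> E \<Longrightarrow> \<exists>u v. u \<noteq> v \<and> u \<in> V \<and> v \<in> V \<and> e = {u,v}"
  unfolding simple_graph_def by blast

lemma sg_finite_E: assumes "simple_graph V E" shows "finite E"
proof -
  have "E \<subseteq> Pow V" using sg_edge[OF assms] by blast
  then show ?thesis using sg_finite[OF assms] finite_subset by blast
qed

lemma sg_sub: "simple_graph V E \<Longrightarrow> A \<subseteq> E \<Longrightarrow> simple_graph V A"
  unfolding simple_graph_def by blast

lemma grank_le_card:
  assumes "simple_graph V E" "A \<subseteq> E"
  shows "grank V A \<le> card A"
proof -
  have "finite A" using sg_finite_E[OF assms(1)] assms(2) finite_subset by blast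
  then show ?thesis using assms(2)
  proof (induction A rule: finite_induct)
    case empty then show ?case using grank_empty[OF sg_finite[OF assms(1)]] by simp
  next
    case (insert e A)
    obtain u v where "u \<in> V" "v \<in> V" "e = {u,v}" using sg_edge[OF assms(1)] insert by blast
    then show ?case using grank_insert_le[OF sg_finite[OF assms(1)], of u v A] insert by simp
  qed
qed

lemma beta_nonneg: "simple_graph V E \<Longrightarrow> A \<subseteq> E \<Longrightarrow> beta V A \<ge> 0"
  unfolding beta_def using grank_le_card by fastforce

lemma mono_aux:
  assumes "simple_graph V E" "finite F" "F \<subseteq> E" "A \<subseteq> E"
  shows "grank V A \<le> grank V (A \<union> F) \<and> beta V A \<le> beta V (A \<union> F)"
  using assms(2,3)
proof (induction F rule: finite_induct)
  case empty then show ?case by simp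
next
  case (insert e F)
  have fA: "finite (A \<union> F)" using sg_finite_E[OF assms(1)] assms(4) insert finite_subset by blast
  obtain u v where uv: "u \<in> V" "v \<in> V" "e = {u,v}" using sg_edge[OF assms(1)] insert by blast
  have eq: "A \<union> insert e F = insert e (A \<union> F)" by auto
  show ?case
  proof (cases "e \<in> A \<union> F")
    case True then show ?thesis using insert eq by (simp add: insert_absorb)
  next
    case False
    then have c: "card (insert e (A \<union> F)) = card (A \<union> F) + 1" using fA by simp
    have "grank V (A \<union> F) \<le> grank V (insert e (A \<union> F)) \<and> grank V (insert e (A \<union> F)) \<le> grank V (A \<union> F) + 1"
      using grank_insert_le[OF sg_finite[OF assms(1)] uv(1,2)] uv(3) by simp
    then show ?thesis using insert c eq unfolding beta_def by auto
  qed
qed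

lemma grank_mono:
  assumes "simple_graph V E" "A \<subseteq> B" "B \<subseteq> E"
  shows "grank V A \<le> grank V B"
proof -
  have "finite (B - A)" using sg_finite_E[OF assms(1)] assms finite_subset by blast
  moreover have "A \<union> (B - A) = B" using assms by auto
  ultimately show ?thesis using mono_aux[OF assms(1), of "B - A" A] assms by (metis subset_trans Diff_subset)
qed

lemma beta_mono:
  assumes "simple_graph V E" "A \<subseteq> B" "B \<subseteq> E"
  shows "beta V A \<le> beta V B"
proof -
  have "finite (B - A)" using sg_finite_E[OF assms(1)] assms finite_subset by blast
  moreover have "A \<union> (B - A) = B" using assms by auto
  ultimately show ?thesis using mono_aux[OF assms(1), of "B - A" A] assms by (metis subset_trans Diff_subset)
qed

lemma beta_insert_conn:
  assumes "simple_graph V E" "A \<subseteq> E" "e \<notin> A" "e = {u,v}" "(u,v) \<in> conn_rel V A"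
  shows "beta V (insert e A) = beta V A + 1"
proof -
  have "finite A" using sg_finite_E[OF assms(1)] assms(2) finite_subset by blast
  then show ?thesis using grank_insert_conn[OF assms(5)] assms(3,4) unfolding beta_def by simp
qed

lemma grank_pos:
  assumes "simple_graph V E" "A \<subseteq> E" "A \<noteq> {}"
  shows "grank V A \<ge> 1"
proof -
  obtain e where e: "e \<in> A" using assms by blast
  obtain u v where uv: "u \<noteq> v" "u \<in> V" "v \<in> V" "e = {u,v}" using sg_edge[OF assms(1)] e assms by blast
  have "(u,v) \<notin> conn_rel V {}" using uv unfolding conn_rel_empty by auto
  then have "grank V {e} = 1" using grank_insert_disconn[OF sg_finite[OF assms(1)] uv(2,3)]
      grank_empty[OF sg_finite[OF assms(1)]] uv(4) by simp
  then show ?thesis using grank_mono[OF assms(1), of "{e}" A] e assms by simp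
qed

lemma remove_nonbridge:
  assumes "simple_graph V E" "B \<subseteq> E" "e \<in> B" "e = {u,v}" "(u,v) \<in> conn_rel V (B - {e})"
  shows "beta V (B - {e}) = beta V B - 1"
proof -
  have "B - {e} \<subseteq> E" using assms(2) by auto
  then show ?thesis using beta_insert_conn[OF assms(1), of "B - {e}" e u v] assms by (simp add: insert_absorb)
qed

lemma remove_bridge:
  assumes "simple_graph V E" "B \<subseteq> E" "e \<in> B" "e = {u,v}" "u \<in> V" "v \<in> V" "(u,v) \<notin> conn_rel V (B - {e})"
  shows "grank V (B - {e}) + 1 = grank V B"
  using grank_insert_disconn[OF sg_finite[OF assms(1)] assms(5,6,7)] assms(3,4) by (simp add: insert_absorb)

lemma connected_conn:
  assumes "connected_graph V E" "u \<in> V" "v \<in> V"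
  shows "(u,v) \<in> conn_rel V E"
proof -
  let ?r = "conn_rel V E"
  have "card (V // ?r) = 1" using assms(1) unfolding connected_graph_def num_comp_def .
  then obtain X where X: "V // ?r = {X}" using card_1_singletonE by blast
  have "?r `` {u} = X" "?r `` {v} = X" using X assms(2,3) quotientI[of _ V ?r] by auto
  moreover have "v \<in> ?r `` {v}" using conn_refl[OF assms(3)] by auto
  ultimately show ?thesis by auto
qed

definition tpg :: "'a set \<Rightarrow> 'a set set \<Rightarrow> 'a \<Rightarrow> 'a \<Rightarrow> 'a list \<Rightarrow> 'a list \<Rightarrow> 'a list \<Rightarrow> nat \<Rightarrow> nat \<Rightarrow> nat \<Rightarrow> bool" where
  "tpg V E s t p1 p2 p3 L1 L2 L3 \<longleftrightarrow>
        path_piece p1 s t L1 \<and> path_piece p2 s t L2 \<and> path_piece p3 s t L3 \<and>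
        inner_verts p1 \<inter> inner_verts p2 = {} \<and> inner_verts p1 \<inter> inner_verts p3 = {} \<and>
        inner_verts p2 \<inter> inner_verts p3 = {} \<and>
        V = set p1 \<union> set p2 \<union> set p3 \<and>
        E = path_edges p1 \<union> path_edges p2 \<union> path_edges p3 \<and>
        card E = L1 + L2 + L3"

lemma three_path_graph_tpg:
  "three_path_graph V E L1 L2 L3 \<longleftrightarrow> (\<exists>s t p1 p2 p3. tpg V E s t p1 p2 p3 L1 L2 L3)"
  unfolding three_path_graph_def tpg_def by simp

lemma tpg_swap12: "tpg V E s t p1 p2 p3 L1 L2 L3 \<Longrightarrow> tpg V E s t p2 p1 p3 L2 L1 L3"
  unfolding tpg_def by (auto simp: ac_simps)

lemma tpg_swap23: "tpg V E s t p1 p2 p3 L1 L2 L3 \<Longrightarrow> tpg V E s t p1 p3 p2 L1 L3 L2"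
  unfolding tpg_def by (auto simp: ac_simps)

lemma card_Un_tight:
  assumes "finite X" "finite Y" "card (X \<union> Y) = card X + card Y"
  shows "X \<inter> Y = {}"
proof -
  have "card (X \<inter> Y) = 0" using card_Un_Int[OF assms(1,2)] assms(3) by simp
  then show ?thesis using assms(1) by simp
qed

lemma tpg_facts:
  assumes "tpg V E s t p1 p2 p3 L1 L2 L3"
  shows "E = pe p1 \<union> pe p2 \<union> pe p3" "card (pe p1) = L1" "card (pe p2) = L2" "card (pe p3) = L3"
    "pe p1 \<inter> pe p2 = {}" "pe p1 \<inter> pe p3 = {}" "pe p2 \<inter> pe p3 = {}"
    "set p1 \<subseteq> V" "set p2 \<subseteq> V" "set p3 \<subseteq> V"
    "path_piece p1 s t L1" "path_piece p2 s t L2" "path_piece p3 s t L3"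
proof -
  have pp: "path_piece p1 s t L1" "path_piece p2 s t L2" "path_piece p3 s t L3"
    and E: "E = pe p1 \<union> pe p2 \<union> pe p3" and cE: "card E = L1 + L2 + L3"
    and V: "V = set p1 \<union> set p2 \<union> set p3"
    using assms unfolding tpg_def path_edges_pe by auto
  then show "E = pe p1 \<union> pe p2 \<union> pe p3" "set p1 \<subseteq> V" "set p2 \<subseteq> V" "set p3 \<subseteq> V"
     "path_piece p1 s t L1" "path_piece p2 s t L2" "path_piece p3 s t L3" by auto
  have c: "card (pe p1) \<le> L1" "card (pe p2) \<le> L2" "card (pe p3) \<le> L3"
    using card_pe_le pp unfolding path_piece_def by (metis diff_add_inverse2)+
  have u1: "card (pe p1 \<union> pe p2) \<le> card (pe p1) + card (pe p2)" by (rule card_Un_le)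
  have u2: "card (pe p1 \<union> pe p2 \<union> pe p3) \<le> card (pe p1 \<union> pe p2) + card (pe p3)" by (rule card_Un_le)
  have cE': "card (pe p1 \<union> pe p2 \<union> pe p3) = L1 + L2 + L3" using cE E by simp
  have t1: "card (pe p1 \<union> pe p2) = card (pe p1) + card (pe p2)"
    using u1 u2 c cE' by linarith
  have t2: "card (pe p1 \<union> pe p2 \<union> pe p3) = card (pe p1 \<union> pe p2) + card (pe p3)"
    using u1 u2 c cE' by linarith
  show "card (pe p1) = L1" "card (pe p2) = L2" "card (pe p3) = L3" using u1 u2 c cE' by linarith+
  show "pe p1 \<inter> pe p2 = {}" using card_Un_tight[OF finite_pe finite_pe t1] .
  have "(pe p1 \<union> pe p2) \<inter> pe p3 = {}" using card_Un_tight[OF _ finite_pe t2] finite_pe by blast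
  then show "pe p1 \<inter> pe p3 = {}" "pe p2 \<inter> pe p3 = {}" by auto
qed

lemma edge_not_in_split:
  assumes "xs = ys @ zs" "ys \<noteq> []" "zs \<noteq> []" "card (pe xs) = length xs - 1"
  shows "{last ys, hd zs} \<notin> pe ys" "{last ys, hd zs} \<notin> pe zs"
proof -
  have eq: "pe xs = pe ys \<union> pe zs \<union> {{last ys, hd zs}}" using pe_append2 assms by simp
  have "card (pe ys \<union> pe zs) \<le> card (pe ys) + card (pe zs)" by (rule card_Un_le)
  then have lt: "card (pe ys \<union> pe zs) < length xs - 1"
    using card_pe_le[of ys] card_pe_le[of zs] assms by (cases ys; cases zs) auto
  show "{last ys, hd zs} \<notin> pe ys"
  proof
    assume "{last ys, hd zs} \<in> pe ys"
    then have "pe xs = pe ys \<union> pe zs" using eq by auto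
    then show False using lt assms(4) by simp
  qed
  show "{last ys, hd zs} \<notin> pe zs"
  proof
    assume "{last ys, hd zs} \<in> pe zs"
    then have "pe xs = pe ys \<union> pe zs" using eq by auto
    then show False using lt assms(4) by simp
  qed
qed

lemma cyc_conn:
  assumes "path_piece p s t L" "card (pe p) = L" "path_piece q s t L'" "set p \<subseteq> V" "set q \<subseteq> V"
    "e \<in> pe p"
  shows "\<exists>u v. e = {u,v} \<and> (u,v) \<in> conn_rel V ((pe p - {e}) \<union> pe q)"
proof -
  obtain ys zs where sp: "p = ys @ zs" "ys \<noteq> []" "zs \<noteq> []" "e = {last ys, hd zs}"
    using pe_split[OF assms(6)] by blast
  have cl: "card (pe p) = length p - 1" using assms(1,2) unfolding path_piece_def by simp
  have n: "e \<notin> pe ys" "e \<notin> pe zs" using edge_not_in_split[OF sp(1-3) cl] sp(4) by auto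
  let ?B = "(pe p - {e}) \<union> pe q"
  have sub: "pe ys \<subseteq> ?B" "pe zs \<subseteq> ?B" using n pe_mono_append1[of ys zs] pe_mono_append2[of zs ys] sp by auto
  have "(hd ys, last ys) \<in> conn_rel V ?B" using walk_conn[OF sp(2) _ sub(1)] assms(4) sp by auto
  moreover have "(hd zs, last zs) \<in> conn_rel V ?B" using walk_conn[OF sp(3) _ sub(2)] assms(4) sp by auto
  moreover have "q \<noteq> []" using assms(3) unfolding path_piece_def by auto
  then have "(hd q, last q) \<in> conn_rel V ?B" using walk_conn[of q V ?B] assms(5) by auto
  moreover have "hd ys = s" "last zs = t" "hd q = s" "last q = t" using assms(1,3) sp unfolding path_piece_def by auto
  ultimately have "(last ys, hd zs) \<in> conn_rel V ?B" using conn_sym conn_trans by metis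
  then show ?thesis using sp(4) by blast
qed

lemma cycle_rank_beta: "cycle_rank V E = beta V E"
  unfolding cycle_rank_def beta_def by simp

lemma rank2_facts:
  assumes "simple_graph V E" "cycle_rank V E = 2"
  shows "card E \<ge> 3" "grank V E + 2 = card E"
proof -
  show g: "grank V E + 2 = card E" using assms(2) unfolding cycle_rank_def by linarith
  then have "E \<noteq> {}" by auto
  then have "grank V E \<ge> 1" using grank_pos[OF assms(1)] by blast
  then show "card E \<ge> 3" using g by linarith
qed

lemma arith_dens:
  fixes a r m :: nat
  assumes "1 \<le> r" "a \<le> r + 1" "m \<le> 2*a \<or> a \<le> r" "3 \<le> m"
  shows "real a / real r \<le> real m / real (m - 2)"
proof -
  have m2: "real (m - 2) = real m - 2" using assms(4) by simp
  have key: "real a * (real m - 2) \<le> real m * real r"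
  proof (cases "a \<le> r")
    case True
    then have "real a * (real m - 2) \<le> real r * (real m - 2)"
      using assms(4) by (intro mult_right_mono) auto
    also have "\<dots> \<le> real m * real r" using assms by (simp add: algebra_simps)
    finally show ?thesis .
  next
    case False
    then have m: "real m \<le> 2 * real a" using assms(3) by linarith
    have "real a * (real m - 2) = real m * (real a - 1) + (real m - 2 * real a)" by (simp add: algebra_simps)
    also have "\<dots> \<le> real m * (real a - 1)" using m by simp
    also have "\<dots> \<le> real m * real r" using assms(2) by (intro mult_left_mono) auto
    finally show ?thesis .
  qed
  have "real r > 0" "real m - 2 > 0" using assms by auto
  then show ?thesis unfolding m2 using key by (simp add: divide_simps mult.commute)
qed

lemma ud_core:
  assumes sg: "simple_graph V E" and cr: "cycle_rank V E = 2"
    and T: "tpg V E s t p1 p2 p3 L1 L2 L3"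
    and len: "L1 \<le> L2 + L3"
    and A: "A \<subseteq> E" "A \<noteq> {}" and e: "e \<in> pe p1" "e \<notin> A"
  shows "density V A \<le> density V E"
proof -
  note F = tpg_facts[OF T]
  have m3: "card E \<ge> 3" and gE: "grank V E + 2 = card E" using rank2_facts[OF sg cr] by auto
  have bE: "beta V E = 2" using cr cycle_rank_beta by metis
  have fE: "finite E" using sg_finite_E[OF sg] .
  have cE: "card E = L1 + L2 + L3" using T unfolding tpg_def by blast
  have eE: "e \<in> E" using e F(1) by auto
  obtain u v where uv: "e = {u,v}" "(u,v) \<in> conn_rel V ((pe p1 - {e}) \<union> pe p2)"
    using cyc_conn[OF F(11) F(2) F(12) F(8) F(9) e(1)] by blast
  have "e \<notin> pe p2" using F(5) e by auto
  then have "(pe p1 - {e}) \<union> pe p2 \<subseteq> E - {e}" using F(1) by auto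
  then have "(u,v) \<in> conn_rel V (E - {e})" by (rule conn_mono[OF _ uv(2)])
  then have bE1: "beta V (E - {e}) = 1" using remove_nonbridge[OF sg _ eE uv(1)] bE by simp
  have AE1: "A \<subseteq> E - {e}" using A e by auto
  have r1: "grank V A \<ge> 1" using grank_pos[OF sg A] .
  have rc: "grank V A \<le> card A" using grank_le_card[OF sg A(1)] .
  have fA: "finite A" using fE A finite_subset by blast
  have dE: "density V E = real (card E) / real (card E - 2)"
    unfolding density_def using gE by (metis add_diff_cancel_right')
  have main: "card E \<le> 2 * card A \<or> card A \<le> grank V A"
  proof (cases "pe p2 \<subseteq> A \<and> pe p3 \<subseteq> A")
    case True
    then have "card (pe p2 \<union> pe p3) \<le> card A" using fA by (intro card_mono) auto
    moreover have "card (pe p2 \<union> pe p3) = L2 + L3" using F(3,4,7) finite_pe card_Un_disjoint by metis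
    ultimately show ?thesis using cE len by linarith
  next
    case False
    have key: "beta V (E - {e} - {e'}) = 0"
      if q: "path_piece q s t L" "card (pe q) = L" "set q \<subseteq> V" "path_piece q' s t L'" "set q' \<subseteq> V"
        "pe q \<union> pe q' \<subseteq> E" "e \<notin> pe q \<union> pe q'" "e' \<in> pe q" "pe q \<inter> pe q' = {}" for q q' L L' e'
    proof -
      obtain u' v' where uv': "e' = {u',v'}" "(u',v') \<in> conn_rel V ((pe q - {e'}) \<union> pe q')"
        using cyc_conn[OF q(1,2,4,3,5,8)] by blast
      have "(pe q - {e'}) \<union> pe q' \<subseteq> E - {e} - {e'}" using q(6,7,8,9) uv' by auto
      then have "(u',v') \<in> conn_rel V (E - {e} - {e'})" by (rule conn_mono[OF _ uv'(2)])
      then show ?thesis using remove_nonbridge[OF sg _ _ uv'(1), of "E - {e}"] bE1 q(6,7,8) by auto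
    qed
    from False obtain e' where e': "(e' \<in> pe p2 \<or> e' \<in> pe p3) \<and> e' \<notin> A" by blast
    have "beta V (E - {e} - {e'}) = 0"
    proof (cases "e' \<in> pe p2")
      case True
      show ?thesis using key[OF F(12) F(3) F(9) F(13) F(10) _ _ True] F(1,5,6,7) e by auto
    next
      case False
      then have e3: "e' \<in> pe p3" using e' by auto
      show ?thesis using key[OF F(13) F(4) F(10) F(12) F(9) _ _ e3] F(1,5,6,7) e by auto
    qed
    moreover have "A \<subseteq> E - {e} - {e'}" using AE1 e' by auto
    ultimately have "beta V A \<le> 0" using beta_mono[OF sg] by (metis Diff_subset order_trans)
    then show ?thesis unfolding beta_def by simp
  qed
  have "card A \<le> grank V A + 1"
    using beta_mono[OF sg AE1] bE1 unfolding beta_def by simp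
  then show ?thesis unfolding dE unfolding density_def using arith_dens[OF r1 _ main m3] by simp
qed

lemma ud_if:
  assumes sg: "simple_graph V E" and cr: "cycle_rank V E = 2"
    and T: "three_path_graph V E L1 L2 L3" and l: "L1 \<le> L2" "L2 \<le> L3" "L3 - L2 \<le> L1"
  shows "uniformly_dense V E"
  unfolding uniformly_dense_def
proof (intro allI impI)
  fix A assume A: "A \<subseteq> E" "A \<noteq> {}"
  obtain s t p1 p2 p3 where T: "tpg V E s t p1 p2 p3 L1 L2 L3" using T three_path_graph_tpg by metis
  show "density V A \<le> density V E"
  proof (cases "A = E")
    case True then show ?thesis by simp
  next
    case False
    then obtain e where e: "e \<in> E" "e \<notin> A" using A by blast
    then have "e \<in> pe p1 \<or> e \<in> pe p2 \<or> e \<in> pe p3" using tpg_facts(1)[OF T] by auto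
    moreover have "L1 \<le> L2 + L3" "L2 \<le> L1 + L3" "L3 \<le> L1 + L2" using l by auto
    ultimately show ?thesis
      using ud_core[OF sg cr T _ A, of e] ud_core[OF sg cr tpg_swap12[OF T] _ A, of e]
        ud_core[OF sg cr tpg_swap12[OF tpg_swap23[OF T]] _ A, of e] e(2) by blast
  qed
qed

lemma bridgeless:
  assumes sg: "simple_graph V E" and cr: "cycle_rank V E = 2" and ud: "uniformly_dense V E"
    and e: "e \<in> E" "e = {u,v}"
  shows "(u,v) \<in> conn_rel V (E - {e})"
proof (rule ccontr)
  assume nc: "(u,v) \<notin> conn_rel V (E - {e})"
  have m3: "card E \<ge> 3" and gE: "grank V E + 2 = card E" using rank2_facts[OF sg cr] by auto
  obtain u' v' where uv': "u' \<noteq> v'" "u' \<in> V" "v' \<in> V" "e = {u',v'}" using sg_edge[OF sg e(1)] by blast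
  have uvV: "u \<in> V" "v \<in> V" using uv' e(2) by (auto simp: doubleton_eq_iff)
  have g1: "grank V (E - {e}) + 1 = grank V E" using remove_bridge[OF sg _ e uvV nc] by simp
  have fE: "finite E" using sg_finite_E[OF sg] .
  have cE1: "card (E - {e}) = card E - 1" using e fE by simp
  have "card (E - {e}) \<noteq> 0" using m3 cE1 by simp
  then have ne: "E - {e} \<noteq> {}" by (metis card.empty)
  have r1: "grank V (E - {e}) \<ge> 1" using grank_pos[OF sg _ ne] by auto
  have "density V (E - {e}) \<le> density V E" using ud ne unfolding uniformly_dense_def by auto
  then have ineq: "real (card E - 1) / real (card E - 3) \<le> real (card E) / real (card E - 2)"
    unfolding density_def using cE1 g1 gE by (metis add_diff_cancel_right' diff_diff_left numeral_Bit1 numeral_One one_add_one)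
  have h: "real (card E - 1) = real (card E) - 1" "real (card E - 3) = real (card E) - 3"
    "real (card E - 2) = real (card E) - 2" using m3 by auto
  have m4: "real (card E) - 3 > 0" using r1 g1 gE by linarith
  from ineq have "(real (card E) - 1) * (real (card E) - 2) \<le> real (card E) * (real (card E) - 3)"
    unfolding h using m4 by (simp add: divide_simps)
  then show False by (simp add: algebra_simps)
qed

lemma beta_minus1:
  assumes sg: "simple_graph V E" and cr: "cycle_rank V E = 2" and ud: "uniformly_dense V E"
    and e: "e \<in> E"
  shows "beta V (E - {e}) = 1"
proof -
  obtain u v where "e = {u,v}" using sg_edge[OF sg e] by blast
  then show ?thesis using remove_nonbridge[OF sg _ e] bridgeless[OF sg cr ud e] cr cycle_rank_beta
    by (metis order_refl one_add_one add_diff_cancel_right')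
qed

lemma full_sub:
  assumes sg: "simple_graph V E" and cr: "cycle_rank V E = 2" and ud: "uniformly_dense V E"
    and H: "H \<subseteq> E" "beta V H \<ge> 2"
  shows "H = E"
proof (rule ccontr)
  assume "H \<noteq> E"
  then obtain g where g: "g \<in> E" "g \<notin> H" using H by blast
  then have "H \<subseteq> E - {g}" using H by auto
  then have "beta V H \<le> beta V (E - {g})" using beta_mono[OF sg] by blast
  then show False using beta_minus1[OF sg cr ud g(1)] H by simp
qed

lemma len_cond:
  assumes sg: "simple_graph V E" and cr: "cycle_rank V E = 2" and ud: "uniformly_dense V E"
    and T: "tpg V E s t p1 p2 p3 a b c" and ab: "a + b \<ge> 1"
  shows "c \<le> a + b"
proof (rule ccontr)
  assume "\<not> c \<le> a + b"
  then have c: "c > a + b" by simp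
  note F = tpg_facts[OF T]
  have m3: "card E \<ge> 3" and gE: "grank V E + 2 = card E" using rank2_facts[OF sg cr] by auto
  have cE: "card E = a + b + c" using T unfolding tpg_def by blast
  define A where "A = pe p1 \<union> pe p2"
  have AE: "A \<subseteq> E" unfolding A_def using F(1) by auto
  have cA: "card A = a + b" unfolding A_def using F(2,3,5) finite_pe card_Un_disjoint by metis
  have Ane: "A \<noteq> {}" using cA ab finite_pe by auto
  have b1: "beta V A \<ge> 1"
  proof -
    have "\<exists>e u v. e \<in> A \<and> e = {u,v} \<and> (u,v) \<in> conn_rel V (A - {e})"
    proof (cases "a \<ge> 1")
      case True
      then obtain e where e: "e \<in> pe p1" using F(2) by fastforce
      obtain u v where uv: "e = {u,v}" "(u,v) \<in> conn_rel V ((pe p1 - {e}) \<union> pe p2)"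
        using cyc_conn[OF F(11) F(2) F(12) F(8) F(9) e] by blast
      have "(pe p1 - {e}) \<union> pe p2 = A - {e}" unfolding A_def using F(5) e by auto
      then show ?thesis using uv e unfolding A_def by auto
    next
      case False
      then have "b \<ge> 1" using ab by simp
      then obtain e where e: "e \<in> pe p2" using F(3) by fastforce
      obtain u v where uv: "e = {u,v}" "(u,v) \<in> conn_rel V ((pe p2 - {e}) \<union> pe p1)"
        using cyc_conn[OF F(12) F(3) F(11) F(9) F(8) e] by blast
      have "(pe p2 - {e}) \<union> pe p1 = A - {e}" unfolding A_def using F(5) e by auto
      then show ?thesis using uv e unfolding A_def by auto
    qed
    then obtain e u v where euv: "e \<in> A" "e = {u,v}" "(u,v) \<in> conn_rel V (A - {e})" by blast
    have "beta V (A - {e}) = beta V A - 1" using remove_nonbridge[OF sg AE euv] .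
    moreover have "beta V (A - {e}) \<ge> 0" using beta_nonneg[OF sg, of "A - {e}"] AE by auto
    ultimately show ?thesis by simp
  qed
  obtain e3 where e3: "e3 \<in> pe p3" using F(4) c by (metis card.empty ex_in_conv not_less_zero)
  have "A \<subseteq> E - {e3}" unfolding A_def using F(1,6,7) e3 by auto
  then have "beta V A \<le> beta V (E - {e3})" using beta_mono[OF sg] by blast
  moreover have "e3 \<in> E" using e3 F(1) by auto
  ultimately have "beta V A \<le> 1" using beta_minus1[OF sg cr ud] by metis
  then have gA: "grank V A + 1 = card A" using b1 unfolding beta_def by simp
  have r1: "grank V A \<ge> 1" using grank_pos[OF sg AE Ane] .
  have "density V A \<le> density V E" using ud AE Ane unfolding uniformly_dense_def by blast
  then have ineq: "real (a + b) / real (a + b - 1) \<le> real (card E) / real (card E - 2)"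
    unfolding density_def using gA gE cA by (metis add_diff_cancel_right')
  have h: "real (a + b - 1) = real (a + b) - 1" "real (card E - 2) = real (card E) - 2" using m3 ab by auto
  have p: "real (a + b) - 1 > 0" using r1 gA cA by linarith
  from ineq have "real (a + b) * (real (card E) - 2) \<le> real (card E) * (real (a + b) - 1)"
    unfolding h using p m3 by (simp add: divide_simps)
  then have "real (card E) \<le> 2 * real (a + b)" by (simp add: algebra_simps)
  then have "real (card E) \<le> real (2 * (a + b))" by simp
  then have "card E \<le> 2 * (a + b)" by (simp only: of_nat_le_iff)
  then show False using cE c by presburger
qed

lemma final_sort:
  assumes sg: "simple_graph V E" and cr: "cycle_rank V E = 2" and ud: "uniformly_dense V E"
    and T: "tpg V E s t p1 p2 p3 a b c" and b: "b \<ge> 1" and c: "c \<ge> 1"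
  shows "\<exists>L1 L2 L3 :: nat. three_path_graph V E L1 L2 L3 \<and> L1 \<le> L2 \<and> L2 \<le> L3 \<and> L3 - L2 \<le> L1"
proof -
  have T1: "tpg V E s t p1 p3 p2 a c b" using tpg_swap23[OF T] .
  have T2: "tpg V E s t p2 p1 p3 b a c" using tpg_swap12[OF T] .
  have T3: "tpg V E s t p2 p3 p1 b c a" using tpg_swap23[OF T2] .
  have T4: "tpg V E s t p3 p1 p2 c a b" using tpg_swap12[OF T1] .
  have T5: "tpg V E s t p3 p2 p1 c b a" using tpg_swap23[OF T4] .
  have c1: "c \<le> a + b" using len_cond[OF sg cr ud T] b by simp
  have c2: "b \<le> a + c" using len_cond[OF sg cr ud T1] c by simp
  have c3: "a \<le> b + c" using len_cond[OF sg cr ud T3] b by simp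
  have G: "three_path_graph V E a b c" "three_path_graph V E a c b" "three_path_graph V E b a c"
    "three_path_graph V E b c a" "three_path_graph V E c a b" "three_path_graph V E c b a"
    using T T1 T2 T3 T4 T5 three_path_graph_tpg by metis+
  consider "a \<le> b" "b \<le> c" | "a \<le> c" "c \<le> b" | "b \<le> a" "a \<le> c" | "b \<le> c" "c \<le> a"
    | "c \<le> a" "a \<le> b" | "c \<le> b" "b \<le> a" by linarith
  then show ?thesis
  proof cases
    case 1 then show ?thesis using G(1) c1 c2 c3 by (intro exI[of _ a] exI[of _ b] exI[of _ c]) auto
  next
    case 2 then show ?thesis using G(2) c1 c2 c3 by (intro exI[of _ a] exI[of _ c] exI[of _ b]) auto
  next
    case 3 then show ?thesis using G(3) c1 c2 c3 by (intro exI[of _ b] exI[of _ a] exI[of _ c]) auto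
  next
    case 4 then show ?thesis using G(4) c1 c2 c3 by (intro exI[of _ b] exI[of _ c] exI[of _ a]) auto
  next
    case 5 then show ?thesis using G(5) c1 c2 c3 by (intro exI[of _ c] exI[of _ a] exI[of _ b]) auto
  next
    case 6 then show ?thesis using G(6) c1 c2 c3 by (intro exI[of _ c] exI[of _ b] exI[of _ a]) auto
  qed
qed

lemma butlast_tl_rev: "butlast (tl (rev xs)) = rev (butlast (tl xs))"
proof (cases xs rule: rev_cases)
  case (snoc ys y)
  then show ?thesis by (cases ys) (auto simp: butlast_append)
qed simp

lemma path_piece_rev: "path_piece xs s t L \<Longrightarrow> path_piece (rev xs) t s L"
  unfolding path_piece_def butlast_tl_rev by (auto simp: hd_rev last_rev)

lemma inner_verts_rev: "inner_verts (rev xs) = inner_verts xs"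
  unfolding inner_verts_def butlast_tl_rev by simp

lemma pe_Cons: "ys \<noteq> [] \<Longrightarrow> pe (x # ys) = insert {x, hd ys} (pe ys)"
  by (cases ys) auto

lemma pe_snoc_vertex: "e \<in> pe (ys @ [z]) \<Longrightarrow> \<exists>w\<in>set ys. w \<in> e"
proof (induction ys)
  case (Cons w ys)
  then show ?case by (cases ys) auto
qed simp

lemma first_hit: "x \<in> set R \<Longrightarrow> x \<in> W \<Longrightarrow> \<exists>R1 z R2. R = R1 @ z # R2 \<and> z \<in> W \<and> set R1 \<inter> W = {}"
proof (induction R)
  case (Cons r R)
  show ?case
  proof (cases "r \<in> W")
    case True
    then show ?thesis by (intro exI[of _ "[]"] exI[of _ r] exI[of _ R]) auto
  next
    case False
    then have "x \<in> set R" using Cons by auto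
    then obtain R1 z R2 where "R = R1 @ z # R2" "z \<in> W" "set R1 \<inter> W = {}" using Cons by blast
    then show ?thesis using False by (intro exI[of _ "r # R1"] exI[of _ z] exI[of _ R2]) auto
  qed
qed simp

lemma set_walk_V:
  assumes "simple_graph V E" "xs \<noteq> []" "hd xs \<in> V" "pe xs \<subseteq> E"
  shows "set xs \<subseteq> V"
proof (cases "length xs \<ge> 2")
  case True
  have "\<Union>E \<subseteq> V" using sg_edge[OF assms(1)] by blast
  then show ?thesis using set_sub_Union_pe[OF True] assms(4) by blast
next
  case False
  then have "xs = [hd xs]" using assms(2) by (cases xs; cases "tl xs") auto
  then show ?thesis using assms(3) by (metis empty_set empty_subsetI insert_subset list.simps(15))
qed

lemma theta_from:
  assumes P: "distinct P" "length P \<ge> 3"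
    and C: "C = insert {hd P, last P} (pe P)" "{hd P, last P} \<notin> pe P"
    and Q: "path_piece Q x z LQ" "inner_verts Q \<inter> set P = {}" "card (pe Q) = LQ"
    and sp: "P = \<alpha> @ x # rest" "z \<in> set (x # rest)"
    and E: "E = C \<union> pe Q" "C \<inter> pe Q = {}"
    and V: "V = set P \<union> set Q"
  shows "\<exists>A1 A2 L1 L2. tpg V E x z A1 A2 Q L1 L2 LQ \<and> L2 \<ge> 1"
proof -
  obtain \<delta> \<gamma> where xr: "x # rest = \<delta> @ z # \<gamma>" using split_list[OF sp(2)] by blast
  have Pd: "P = \<alpha> @ \<delta> @ z # \<gamma>" using sp(1) xr by simp
  have dP: "distinct (\<alpha> @ \<delta> @ z # \<gamma>)" using P(1) Pd by simp
  have xloc: "(\<delta> = [] \<and> x = z) \<or> (\<delta> \<noteq> [] \<and> hd \<delta> = x)" using xr by (cases \<delta>) auto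
  have xa: "x \<notin> set \<alpha>" using P(1) sp(1) by simp
  have xg: "x \<notin> set \<gamma>" using xloc dP by (cases \<delta>) auto
  define A1 where "A1 = \<delta> @ [z]"
  define A2 where "A2 = rev ((z # \<gamma>) @ (\<alpha> @ [x]))"
  define L1 where "L1 = length \<delta>"
  define L2 where "L2 = length \<gamma> + length \<alpha> + 1"
  have bt1: "butlast (tl A1) = tl \<delta>" unfolding A1_def by (cases \<delta>) auto
  have xtd: "x \<notin> set (tl \<delta>)" using xloc dP by (cases \<delta>) auto
  have std: "set (tl \<delta>) \<subseteq> set \<delta>" by (cases \<delta>) auto
  have pp1: "path_piece A1 x z L1"
    unfolding path_piece_def bt1 using xloc dP xtd std unfolding A1_def L1_def
    by (auto simp: distinct_tl)
  have A2e: "A2 = x # rev \<alpha> @ rev \<gamma> @ [z]" unfolding A2_def by simp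
  have bt2: "butlast (tl A2) = rev \<alpha> @ rev \<gamma>" unfolding A2e by (simp add: butlast_append)
  have pp2: "path_piece A2 x z L2"
    unfolding path_piece_def bt2 using xa xg dP unfolding A2e L2_def by auto
  have in1: "inner_verts A1 = set (tl \<delta>)" unfolding inner_verts_def bt1 ..
  have in2: "inner_verts A2 = set \<alpha> \<union> set \<gamma>" unfolding inner_verts_def bt2 by auto
  have i12: "inner_verts A1 \<inter> inner_verts A2 = {}" unfolding in1 in2 using dP std by auto
  have sP: "set P = set \<alpha> \<union> set \<delta> \<union> {z} \<union> set \<gamma>" using Pd by auto
  have i13: "inner_verts A1 \<inter> inner_verts Q = {}" using Q(2) in1 std sP by auto
  have i23: "inner_verts A2 \<inter> inner_verts Q = {}" using Q(2) in2 sP by auto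
  have xP: "x \<in> set P" using sp(1) by simp
  have VV: "V = set A1 \<union> set A2 \<union> set Q" unfolding V A1_def A2_def using sP xP by auto
  have peP: "pe P = pe (\<alpha> @ [x]) \<union> pe (\<delta> @ [z]) \<union> pe (z # \<gamma>)"
    using pe_append[of \<alpha> x rest] pe_append[of \<delta> z \<gamma>] sp(1) xr by auto
  have hdP: "hd P = hd (\<alpha> @ [x])" using sp(1) by (cases \<alpha>) auto
  have lastP: "last P = last (z # \<gamma>)" using Pd by simp
  have peA2: "pe A2 = pe (z # \<gamma>) \<union> pe (\<alpha> @ [x]) \<union> {{last (z # \<gamma>), hd (\<alpha> @ [x])}}"
    unfolding A2_def pe_rev by (rule pe_append2) auto
  have CA: "C = pe A1 \<union> pe A2" unfolding C(1) peP peA2 hdP lastP A1_def by (auto simp: insert_commute)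
  have EE: "E = path_edges A1 \<union> path_edges A2 \<union> path_edges Q" unfolding path_edges_pe E(1) CA ..
  have fC: "finite C" unfolding C(1) using finite_pe by simp
  have cC: "card C = length P" unfolding C(1) using C(2) card_pe_distinct[OF P(1)] P(2) by (simp add: finite_pe)
  have cE: "card E = L1 + L2 + LQ"
    unfolding E(1) using card_Un_disjoint[OF fC finite_pe E(2)] cC Q(3) Pd L1_def L2_def by simp
  have "tpg V E x z A1 A2 Q L1 L2 LQ"
    unfolding tpg_def using pp1 pp2 Q(1) i12 i13 i23 VV EE cE by blast
  moreover have "L2 \<ge> 1" unfolding L2_def by simp
  ultimately show ?thesis by blast
qed

lemma theta_exists:
  assumes sg: "simple_graph V E" and cn: "connected_graph V E" and cr: "cycle_rank V E = 2"
    and ud: "uniformly_dense V E"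
  shows "\<exists>s t p1 p2 p3 a b c. tpg V E s t p1 p2 p3 a b c \<and> b \<ge> 1 \<and> c \<ge> 1"
proof -
  have m3: "card E \<ge> 3" and gE: "grank V E + 2 = card E" using rank2_facts[OF sg cr] by auto
  have fE: "finite E" using sg_finite_E[OF sg] .
  have UE: "\<Union>E \<subseteq> V" using sg_edge[OF sg] by blast
  have bl: "(u,v) \<in> conn_rel V (E - {e})" if "e \<in> E" "e = {u,v}" for e u v
    using bridgeless[OF sg cr ud that] .
  have "E \<noteq> {}" using m3 by auto
  then obtain e1 where e1: "e1 \<in> E" by blast
  obtain a b where ab: "a \<noteq> b" "a \<in> V" "b \<in> V" "e1 = {a,b}" using sg_edge[OF sg e1] by blast
  have "(a,b) \<in> (adj (E - {e1}))\<^sup>*" using bl[OF e1 ab(4)] unfolding conn_rel_adj by simp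
  then obtain P where P: "P \<noteq> []" "hd P = a" "last P = b" "distinct P" "pe P \<subseteq> E - {e1}"
    using rtrancl_path by metis
  have PE: "pe P \<subseteq> E" using P(5) by auto
  have PV: "set P \<subseteq> V" using set_walk_V[OF sg P(1) _ PE] P(2) ab(2) by simp
  have e1P: "e1 \<notin> pe P" using P(5) by auto
  have len3: "length P \<ge> 3"
  proof -
    obtain p0 rest where Pc: "P = p0 # rest" using P(1) by (cases P) auto
    show ?thesis
    proof (cases rest)
      case Nil then show ?thesis using Pc P(2,3) ab(1) by simp
    next
      case (Cons r rest')
      show ?thesis
      proof (cases rest')
        case Nil
        then have "P = [a,b]" using Pc Cons P(2,3) by simp
        then show ?thesis using e1P ab(4) by simp
      next
        case (Cons r' rest'')
        then show ?thesis using Pc \<open>rest = r # rest'\<close> by simp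
      qed
    qed
  qed
  define C where "C = insert e1 (pe P)"
  have C': "C = insert {hd P, last P} (pe P)" "{hd P, last P} \<notin> pe P"
    unfolding C_def using P(2,3) ab(4) e1P by auto
  have CE: "C \<subseteq> E" unfolding C_def using PE e1 by auto
  have abP: "a \<in> set P" "b \<in> set P" using P(1,2,3) hd_in_set last_in_set by metis+
  have UC: "\<Union>C \<subseteq> set P" unfolding C_def using pe_sub_set abP ab(4) by blast
  have "(a,b) \<in> conn_rel V (pe P)" using walk_conn[OF P(1) PV order_refl] P(2,3) by simp
  then have "beta V C = beta V (pe P) + 1" unfolding C_def using beta_insert_conn[OF sg PE e1P ab(4)] by simp
  then have bC: "beta V C \<ge> 1" using beta_nonneg[OF sg PE] by simp
  have cC: "card C = length P" unfolding C_def using card_pe_distinct[OF P(4)] e1P len3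
    by (simp add: finite_pe)
  have allconn: "v = a \<or> v \<in> \<Union>E" if "v \<in> V" for v
  proof -
    have "(a,v) \<in> conn_rel V E" using connected_conn[OF cn ab(2) that] .
    then have "(a,v) \<in> (adj E)\<^sup>*" unfolding conn_rel_adj by simp
    then show ?thesis using rtrancl_Union by metis
  qed
  have CneE: "C \<noteq> E"
  proof
    assume CEq: "C = E"
    have "V \<subseteq> set P" using allconn UC abP CEq by blast
    then have VP: "V = set P" using PV by blast
    have "grank V E = card V - 1" using cn unfolding grank_def connected_graph_def by simp
    then have "grank V E = length P - 1" using VP distinct_card[OF P(4)] by simp
    then show False using gE cC CEq len3 by simp
  qed
  obtain g x y where g: "g \<in> E" "g \<notin> C" "g = {x,y}" "x \<in> set P"
  proof -
    obtain f where f: "f \<in> E" "f \<notin> C" using CneE CE by blast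
    obtain u v where uv: "u \<in> V" "v \<in> V" "f = {u,v}" using sg_edge[OF sg f(1)] by blast
    show ?thesis
    proof (cases "u \<in> set P")
      case True then show ?thesis using that f uv by blast
    next
      case F1: False
      show ?thesis
      proof (cases "v \<in> set P")
        case True then show ?thesis using that[of f v u] f uv by (simp add: insert_commute)
      next
        case False
        have "(a,u) \<in> conn_rel V E" using connected_conn[OF cn ab(2) uv(1)] .
        then have "(a,u) \<in> (adj E)\<^sup>*" unfolding conn_rel_adj by simp
        then obtain x' y' where "{x',y'} \<in> E" "x' \<in> set P" "y' \<notin> set P"
          using rtrancl_cross[OF \<open>(a,u) \<in> (adj E)\<^sup>*\<close> abP(1) F1] by blast
        moreover have "{x',y'} \<notin> C"
        proof
          assume "{x',y'} \<in> C"
          then have "y' \<in> \<Union>C" by blast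
          then show False using UC \<open>y' \<notin> set P\<close> by blast
        qed
        ultimately show ?thesis using that by blast
      qed
    qed
  qed
  obtain u' v' where uv': "u' \<noteq> v'" "u' \<in> V" "v' \<in> V" "g = {u',v'}" using sg_edge[OF sg g(1)] by blast
  have xyV: "x \<in> V" "y \<in> V" "x \<noteq> y" using uv' g(3) by (auto simp: doubleton_eq_iff)
  have "(x,y) \<in> conn_rel V (E - {g})" using bl[OF g(1,3)] .
  then have "(y,x) \<in> conn_rel V (E - {g})" by (rule conn_sym)
  then have "(y,x) \<in> (adj (E - {g}))\<^sup>*" unfolding conn_rel_adj by simp
  then obtain R where R: "R \<noteq> []" "hd R = y" "last R = x" "distinct R" "pe R \<subseteq> E - {g}"
    using rtrancl_path by metis
  have RV: "set R \<subseteq> V" using set_walk_V[OF sg R(1) _] R(2,5) xyV by auto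
  have "x \<in> set R" using R(1,3) last_in_set by metis
  then obtain R1 z R2 where Rs: "R = R1 @ z # R2" "z \<in> set P" "set R1 \<inter> set P = {}"
    using first_hit g(4) by metis
  define Q where "Q = x # R1 @ [z]"
  define LQ where "LQ = length R1 + 1"
  have hdy: "hd (R1 @ [z]) = y" using R(2) Rs(1) by (cases R1) auto
  have peRz: "pe (R1 @ [z]) \<subseteq> pe R" using pe_append[of R1 z R2] Rs(1) by auto
  have gn: "g \<notin> pe (R1 @ [z])" using peRz R(5) by auto
  have peQ: "pe Q = insert g (pe (R1 @ [z]))" unfolding Q_def using pe_Cons[of "R1 @ [z]" x] hdy g(3) by simp
  have dR1z: "distinct (R1 @ [z])" using R(4) Rs(1) by simp
  have cQ: "card (pe Q) = LQ" unfolding peQ LQ_def using card_pe_distinct[OF dR1z] gn by (simp add: finite_pe)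
  have QC: "C \<inter> pe Q = {}"
  proof -
    have "e \<notin> C" if ein: "e \<in> pe (R1 @ [z])" for e
    proof
      assume "e \<in> C"
      obtain w where "w \<in> set R1" "w \<in> e" using pe_snoc_vertex[OF ein] by blast
      then show False using \<open>e \<in> C\<close> UC Rs(3) by blast
    qed
    then show ?thesis unfolding peQ using g(2) by blast
  qed
  have bt: "butlast (tl Q) = R1" unfolding Q_def by simp
  have ppQ: "path_piece Q x z LQ"
    unfolding path_piece_def bt using dR1z Rs(2,3) g(4) unfolding Q_def LQ_def by auto
  have inQ: "inner_verts Q \<inter> set P = {}" unfolding inner_verts_def bt using Rs(3) .
  have QV: "set Q \<subseteq> V" unfolding Q_def using xyV RV Rs(1) by auto
  define H' where "H' = C \<union> pe (R1 @ [z])"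
  have H'E: "H' \<subseteq> E" unfolding H'_def using CE peRz R(5) by auto
  have bH': "beta V H' \<ge> 1" using beta_mono[OF sg _ H'E, of C] bC unfolding H'_def by auto
  have gH': "g \<notin> H'" unfolding H'_def using g(2) gn by auto
  have "pe P \<subseteq> H'" unfolding H'_def C_def by auto
  then have "(x,z) \<in> conn_rel V H'" using set_walk_conn[OF g(4) Rs(2) PV] by blast
  moreover have "(y,z) \<in> conn_rel V H'"
  proof -
    have "set (R1 @ [z]) \<subseteq> V" using RV Rs(1) by auto
    then have "(hd (R1 @ [z]), last (R1 @ [z])) \<in> conn_rel V H'"
      using walk_conn[of "R1 @ [z]" V H'] unfolding H'_def by auto
    then show ?thesis using hdy by simp
  qed
  ultimately have "(x,y) \<in> conn_rel V H'" using conn_sym conn_trans by metis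
  then have "beta V (insert g H') = beta V H' + 1" using beta_insert_conn[OF sg H'E gH' g(3)] by simp
  moreover have "insert g H' = C \<union> pe Q" unfolding H'_def peQ by auto
  ultimately have "beta V (C \<union> pe Q) \<ge> 2" using bH' by simp
  moreover have "C \<union> pe Q \<subseteq> E" using H'E g(1) \<open>insert g H' = C \<union> pe Q\<close> by auto
  ultimately have EQ: "E = C \<union> pe Q" using full_sub[OF sg cr ud] by metis
  have VQ: "V = set P \<union> set Q"
  proof
    show "V \<subseteq> set P \<union> set Q"
    proof
      fix v assume "v \<in> V"
      then have "v = a \<or> v \<in> \<Union>E" using allconn by blast
      then show "v \<in> set P \<union> set Q" using abP UC EQ pe_sub_set by blast
    qed
    show "set P \<union> set Q \<subseteq> V" using PV QV by auto
  qed
  obtain \<alpha> rest where Ps: "P = \<alpha> @ x # rest" using split_list[OF g(4)] by blast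
  have LQ1: "LQ \<ge> 1" unfolding LQ_def by simp
  show ?thesis
  proof (cases "z \<in> set (x # rest)")
    case True
    obtain A1 A2 L1 L2 where "tpg V E x z A1 A2 Q L1 L2 LQ" "L2 \<ge> 1"
      using theta_from[OF P(4) len3 C' ppQ inQ cQ Ps True EQ QC VQ] by blast
    then show ?thesis using LQ1 by blast
  next
    case False
    then have "z \<in> set \<alpha>" using Rs(2) Ps by auto
    then obtain \<alpha>' \<gamma>' where "\<alpha> = \<alpha>' @ z # \<gamma>'" using split_list by metis
    then have Ps': "P = \<alpha>' @ z # (\<gamma>' @ x # rest)" using Ps by simp
    have x2: "x \<in> set (z # \<gamma>' @ x # rest)" by simp
    have ppQ': "path_piece (rev Q) z x LQ" using path_piece_rev[OF ppQ] .
    have inQ': "inner_verts (rev Q) \<inter> set P = {}" using inQ inner_verts_rev by metis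
    have cQ': "card (pe (rev Q)) = LQ" using cQ pe_rev by metis
    have EQ': "E = C \<union> pe (rev Q)" "C \<inter> pe (rev Q) = {}" using EQ QC pe_rev by metis+
    have VQ': "V = set P \<union> set (rev Q)" using VQ by simp
    obtain A1 A2 L1 L2 where "tpg V E z x A1 A2 (rev Q) L1 L2 LQ" "L2 \<ge> 1"
      using theta_from[OF P(4) len3 C' ppQ' inQ' cQ' Ps' x2 EQ' VQ'] by blast
    then show ?thesis using LQ1 by blast
  qed
qed

theorem theorem3p10:
  fixes V :: "'a set" and E :: "'a set set"
  assumes "simple_graph V E" and "connected_graph V E" and "cycle_rank V E = 2"
  shows "uniformly_dense V E \<longleftrightarrow>
    (\<exists>L1 L2 L3 :: nat. three_path_graph V E L1 L2 L3 \<and>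
        L1 \<le> L2 \<and> L2 \<le> L3 \<and> L3 - L2 \<le> L1)"
proof
  assume ud: "uniformly_dense V E"
  obtain s t p1 p2 p3 a b c where "tpg V E s t p1 p2 p3 a b c" "b \<ge> 1" "c \<ge> 1"
    using theta_exists[OF assms ud] by blast
  then show "\<exists>L1 L2 L3 :: nat. three_path_graph V E L1 L2 L3 \<and> L1 \<le> L2 \<and> L2 \<le> L3 \<and> L3 - L2 \<le> L1"
    using final_sort[OF assms(1,3) ud] by blast
next
  assume "\<exists>L1 L2 L3 :: nat. three_path_graph V E L1 L2 L3 \<and> L1 \<le> L2 \<and> L2 \<le> L3 \<and> L3 - L2 \<le> L1"
  then obtain L1 L2 L3 where "three_path_graph V E L1 L2 L3" "L1 \<le> L2" "L2 \<le> L3" "L3 - L2 \<le> L1" by blast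
  then show "uniformly_dense V E" using ud_if[OF assms(1,3)] by blast
qed

end
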